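(* Let $n\ge3$, $m=n-1$, $A_1=E_1$, $A_i=E_i+E_{i-1,n}$ for $i=2,\dots,n-1$. Let $i\in\{1,\dots,m-1\}$ and let $(Y_1,\dots,Y_i)$ be a strict facial reduction sequence for $\mathcal S^n_+$ all of whose members lie in $\operatorname{lin}\{A_1,\dots,A_m\}$. Then $$\mathcal S^n_+\cap Y_1^\perp\cap\dots\cap Y_i^\perp=0_i\oplus\mathcal S^{n-i}_+ .$$
   Context: $E_{ij}\in\mathcal S^n$ has only nonzero entries $1$ in positions $(i,j),(j,i)$; $E_i:=E_{ii}$; orthogonality is with respect to $S\bullet T=\operatorname{trace}(ST)$. For a closed convex cone $K$, $K^*=\{y:\langle y,x\rangle\ge0\ \forall x\in K\}$. A facial reduction sequence for $K$ is $(y_1,\dots,y_k)$ such that, with $F_0=K$ and $F_j=F_{j-1}\cap y_j^\perp$, one has $y_j\in F_{j-1}^*$ for all $j$; it is strict if moreover $y_j\in F_{j-1}^*\setminus F_{j-1}^\perp$ for all $j$. $0_i\oplus\mathcal S^{n-i}_+$ denotes matrices whose first $i$ rows and columns are zero and whose lower right $(n-i)\times(n-i)$ block is positive semidefinite. *)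

theory Defs
  imports Complex_Main
begin

text \<open>n x n real symmetric matrices are represented as functions
  nat => nat => real, indexed by 1..n, symmetric and zero outside {1..n} x {1..n}.\<close>

type_synonym mat = "nat \<Rightarrow> nat \<Rightarrow> real"

definition symS :: "nat \<Rightarrow> mat set" where
  "symS n = {X. (\<forall>a b. X a b = X b a) \<and>
                (\<forall>a b. a \<notin> {1..n} \<or> b \<notin> {1..n} \<longrightarrow> X a b = 0)}"

definition frob :: "nat \<Rightarrow> mat \<Rightarrow> mat \<Rightarrow> real" where
  "frob n S T = (\<Sum>a=1..n. \<Sum>b=1..n. S a b * T b a)"

definition PSD :: "nat \<Rightarrow> mat set" where
  "PSD n = {X \<in> symS n. \<forall>v::nat \<Rightarrow> real. (\<Sum>a=1..n. \<Sum>b=1..n. v a * X a b * v b) \<ge> 0}"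

definition dualc :: "nat \<Rightarrow> mat set \<Rightarrow> mat set" where
  "dualc n K = {Y \<in> symS n. \<forall>X\<in>K. frob n Y X \<ge> 0}"

definition perp :: "nat \<Rightarrow> mat set \<Rightarrow> mat set" where
  "perp n F = {Y \<in> symS n. \<forall>X\<in>F. frob n Y X = 0}"

text \<open>F_j = K \<inter> y_1^perp \<inter> ... \<inter> y_j^perp (list positions 0..j-1).\<close>
definition fr_face :: "nat \<Rightarrow> mat set \<Rightarrow> mat list \<Rightarrow> nat \<Rightarrow> mat set" where
  "fr_face n K ys j = K \<inter> {X \<in> symS n. \<forall>k<j. frob n (ys ! k) X = 0}"

definition fr_seq :: "nat \<Rightarrow> mat set \<Rightarrow> mat list \<Rightarrow> bool" where
  "fr_seq n K ys = (\<forall>j<length ys. ys ! j \<in> dualc n (fr_face n K ys j))"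

definition strict_fr_seq :: "nat \<Rightarrow> mat set \<Rightarrow> mat list \<Rightarrow> bool" where
  "strict_fr_seq n K ys = (\<forall>j<length ys.
      ys ! j \<in> dualc n (fr_face n K ys j) - perp n (fr_face n K ys j))"

definition Emat :: "nat \<Rightarrow> nat \<Rightarrow> mat" where
  "Emat i j = (\<lambda>a b. if (a = i \<and> b = j) \<or> (a = j \<and> b = i) then 1 else 0)"

definition Amat :: "nat \<Rightarrow> nat \<Rightarrow> mat" where
  "Amat n k = (if k = 1 then Emat 1 1
               else (\<lambda>a b. Emat k k a b + Emat (k - 1) n a b))"

definition linA :: "nat \<Rightarrow> mat set" where
  "linA n = {(\<lambda>a b. \<Sum>k=1..n-1. c k * Amat n k a b) | c :: nat \<Rightarrow> real. True}"

definition zero_oplus_psd :: "nat \<Rightarrow> nat \<Rightarrow> mat set" where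
  "zero_oplus_psd n i = {X \<in> symS n.
      (\<forall>a b. a \<le> i \<or> b \<le> i \<longrightarrow> X a b = 0) \<and>
      (\<forall>v::nat \<Rightarrow> real. (\<Sum>a=i+1..n. \<Sum>b=i+1..n. v a * X a b * v b) \<ge> 0)}"

end

theory Submission
  imports Defs
begin

lemma two_point:
  fixes M :: mat and w :: "nat \<Rightarrow> real"
  assumes "finite S" "p \<in> S" "q \<in> S" "p \<noteq> q" "\<forall>x. x \<notin> {p,q} \<longrightarrow> w x = 0"
  shows "(\<Sum>a\<in>S. \<Sum>b\<in>S. w a * M a b * w b) =
     w p * M p p * w p + w p * M p q * w q + w q * M q p * w p + w q * M q q * w q"
proof -
  have inner: "(\<Sum>b\<in>S. w a * M a b * w b) = w a * M a p * w p + w a * M a q * w q" for a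
  proof -
    have "(\<Sum>b\<in>S. w a * M a b * w b) = (\<Sum>b\<in>{p,q}. w a * M a b * w b)"
      by (rule sum.mono_neutral_right) (use assms in auto)
    then show ?thesis using assms(4) by simp
  qed
  have "(\<Sum>a\<in>S. \<Sum>b\<in>S. w a * M a b * w b) = (\<Sum>a\<in>S. w a * M a p * w p + w a * M a q * w q)"
    using inner by simp
  also have "\<dots> = (\<Sum>a\<in>{p,q}. w a * M a p * w p + w a * M a q * w q)"
    by (rule sum.mono_neutral_right) (use assms in auto)
  also have "\<dots> = w p * M p p * w p + w p * M p q * w q + w q * M q p * w p + w q * M q q * w q"
    using assms(4) by simp
  finally show ?thesis .
qed

lemma rank1_psd:
  fixes u v :: "nat \<Rightarrow> real"
  shows "(\<Sum>a\<in>S. \<Sum>b\<in>S. u a * (v a * v b) * u b) \<ge> 0"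
proof -
  have "(\<Sum>a\<in>S. \<Sum>b\<in>S. u a * (v a * v b) * u b) = (\<Sum>a\<in>S. u a * v a) * (\<Sum>b\<in>S. u b * v b)"
    by (simp add: sum_product mult_ac)
  also have "\<dots> \<ge> 0" by simp
  finally show ?thesis .
qed

lemma quad_zero:
  fixes a b :: real
  assumes "\<forall>s. a * s^2 + b * s \<ge> 0"
  shows "b = 0"
proof (rule ccontr)
  assume bne: "b \<noteq> 0"
  define t where "t = 1 / (\<bar>a\<bar> + 1)"
  have tp: "t > 0" unfolding t_def by simp
  have "a * t \<le> \<bar>a\<bar> * t" using tp by (simp add: mult_right_mono)
  also have "\<bar>a\<bar> * t < 1" unfolding t_def by (simp add: field_simps)
  finally have at: "a * t < 1" .
  have eq: "a * (-b*t)^2 + b * (-b*t) = -((b^2*t)*(1 - a*t))"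
    by (simp add: algebra_simps power2_eq_square)
  have "(b^2*t)*(1 - a*t) > 0" using bne tp at by simp
  then have "a * (-b*t)^2 + b * (-b*t) < 0" using eq by linarith
  then show False using assms by (metis not_le)
qed

lemma lin_zero:
  fixes b d :: real
  assumes "\<forall>s. b * s + d \<ge> 0"
  shows "b = 0"
proof (rule ccontr)
  assume bne: "b \<noteq> 0"
  have "b * (- (\<bar>d\<bar> + 1) / b) + d \<ge> 0" using assms by blast
  moreover have "b * (- (\<bar>d\<bar> + 1) / b) = - (\<bar>d\<bar> + 1)" using bne by simp
  ultimately show False by linarith
qed

lemma psd_diag_zero:
  fixes X :: mat
  assumes fin: "finite S" and psd: "\<forall>v::nat\<Rightarrow>real. (\<Sum>a\<in>S. \<Sum>b\<in>S. v a * X a b * v b) \<ge> 0"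
    and sym: "\<forall>a b. X a b = X b a"
    and pS: "p \<in> S" and qS: "q \<in> S" and pq: "p \<noteq> q" and d: "X p p = 0"
  shows "X p q = 0"
proof -
  have "\<forall>s. (2 * X p q) * s + X q q \<ge> 0"
  proof
    fix s :: real
    define w where "w = (\<lambda>x. if x = p then s else if x = q then 1 else (0::real))"
    have "(\<Sum>a\<in>S. \<Sum>b\<in>S. w a * X a b * w b) \<ge> 0" using psd by blast
    also have "(\<Sum>a\<in>S. \<Sum>b\<in>S. w a * X a b * w b) =
       w p * X p p * w p + w p * X p q * w q + w q * X q p * w p + w q * X q q * w q"
      by (rule two_point) (use fin pS qS pq in \<open>auto simp: w_def\<close>)
    finally show "(2 * X p q) * s + X q q \<ge> 0"
      using pq d sym[rule_format, of q p] by (simp add: w_def algebra_simps)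
  qed
  from lin_zero[OF this] show ?thesis by simp
qed

lemma drop_row:
  fixes X :: mat
  assumes "\<forall>b. X p b = 0" "\<forall>a. X a p = 0" "p \<le> n"
  shows "(\<Sum>a=p..n. \<Sum>b=p..n. v a * X a b * v b) = (\<Sum>a=Suc p..n. \<Sum>b=Suc p..n. v a * X a b * v b)"
  using assms by (simp add: sum.atLeast_Suc_atMost)

lemma Amat_entry:
  "Amat n k a b = (if k = 1 then (if a = 1 \<and> b = 1 then 1 else 0)
     else (if a = k \<and> b = k then 1 else 0) + (if (a = k - 1 \<and> b = n) \<or> (a = n \<and> b = k - 1) then 1 else 0))"
  by (simp add: Amat_def Emat_def)

lemma step:
  assumes n3: "j + 3 \<le> n" and Ylin: "Y \<in> linA n"
    and Yd: "Y \<in> dualc n (zero_oplus_psd n j)" and Ynp: "Y \<notin> perp n (zero_oplus_psd n j)"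
  shows "zero_oplus_psd n j \<inter> {X \<in> symS n. frob n Y X = 0} = zero_oplus_psd n (Suc j)"
proof -
  obtain c where Yc: "Y = (\<lambda>a b. \<Sum>k=1..n-1. c k * Amat n k a b)"
    using Ylin unfolding linA_def by blast
  have Ysym: "Y \<in> symS n" using Yd unfolding dualc_def by blast
  have Ynn: "Y n n = 0"
    unfolding Yc by (intro sum.neutral) (auto simp: Amat_entry)
  have Yll: "Y l l = c l" if "1 \<le> l" "l \<le> n - 1" for l
  proof -
    have "Y l l = (\<Sum>k=1..n-1. if k = l then c k else 0)"
      unfolding Yc by (intro sum.cong) (use that in \<open>auto simp: Amat_entry\<close>)
    then show ?thesis using that by simp
  qed
  have Yln: "Y l n = c (l+1)" if "1 \<le> l" "l + 2 \<le> n" for l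
  proof -
    have "Y l n = (\<Sum>k=1..n-1. if k = l + 1 then c k else 0)"
      unfolding Yc by (intro sum.cong) (use that in \<open>auto simp: Amat_entry\<close>)
    then show ?thesis using that by auto
  qed
  have Ynl: "Y n l = c (l+1)" if "1 \<le> l" "l + 2 \<le> n" for l
  proof -
    have "Y n l = (\<Sum>k=1..n-1. if k = l + 1 then c k else 0)"
      unfolding Yc by (intro sum.cong) (use that in \<open>auto simp: Amat_entry\<close>)
    then show ?thesis using that by auto
  qed
  have cz: "c k = 0" if k: "j + 2 \<le> k" "k \<le> n - 1" for k
  proof -
    define l where "l = k - 1"
    have l: "1 \<le> l" "l + 2 \<le> n" "j + 1 \<le> l" "k = l + 1" using k n3 unfolding l_def by auto
    have "\<forall>s. c l * s^2 + (2 * c k) * s \<ge> 0"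
    proof
      fix s :: real
      define v where "v = (\<lambda>x. if x = l then s else if x = n then 1 else (0::real))"
      define X where "X = (\<lambda>a b. v a * v b)"
      have vz: "v x = 0" if "x \<le> j \<or> x \<notin> {1..n}" for x
        using that l n3 by (auto simp: v_def)
      have XF: "X \<in> zero_oplus_psd n j"
        unfolding zero_oplus_psd_def symS_def
        using vz rank1_psd[where v=v] by (auto simp: X_def mult.commute)
      then have "frob n Y X \<ge> 0" using Yd unfolding dualc_def by blast
      also have "frob n Y X = (\<Sum>a\<in>{1..n}. \<Sum>b\<in>{1..n}. v a * Y a b * v b)"
        unfolding frob_def X_def by (intro sum.cong refl) (simp add: mult_ac)
      also have "\<dots> = v l * Y l l * v l + v l * Y l n * v n + v n * Y n l * v l + v n * Y n n * v n"
        by (rule two_point) (use l in \<open>auto simp: v_def\<close>)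
      also have "\<dots> = c l * s^2 + (2 * c k) * s"
        using l Yll[of l] Yln[of l] Ynl[of l] Ynn by (simp add: v_def power2_eq_square algebra_simps)
      finally show "c l * s^2 + (2 * c k) * s \<ge> 0" .
    qed
    from quad_zero[OF this] show ?thesis by simp
  qed
  have key: "frob n Y X = c (Suc j) * X (Suc j) (Suc j)" if XF: "X \<in> zero_oplus_psd n j" for X
  proof -
    have Xz: "X a b = 0" if "a \<le> j \<or> b \<le> j" for a b using XF that unfolding zero_oplus_psd_def by blast
    have pt: "Y a b * X b a = (if a = Suc j \<and> b = Suc j then c (Suc j) * X (Suc j) (Suc j) else 0)"
      if ab: "a \<in> {1..n}" "b \<in> {1..n}" for a b
    proof (cases "a \<le> j \<or> b \<le> j")
      case True then show ?thesis using Xz by auto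
    next
      case False
      show ?thesis
      proof (cases "a = Suc j \<and> b = Suc j")
        case True
        have "Y a b = (\<Sum>k=1..n-1. if k = Suc j then c k else 0)"
          unfolding Yc by (intro sum.cong) (use True cz in \<open>auto simp: Amat_entry\<close>)
        also have "\<dots> = c (Suc j)"
        proof -
          have "Suc j \<le> n - Suc 0" using n3 by linarith
          then show ?thesis by simp
        qed
        finally have Yab: "Y a b = c (Suc j)" .
        from True have a: "a = Suc j" and b: "b = Suc j" by auto
        show ?thesis using Yab unfolding a b by simp
      next
        case False2: False
        have "Y a b = (\<Sum>k=1..n-1. 0)"
          unfolding Yc
        proof (intro sum.cong refl)
          fix k assume k: "k \<in> {1..n-1}"
          show "c k * Amat n k a b = 0"
          proof (cases "j + 2 \<le> k")
            case True then show ?thesis using cz k by simp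
          next
            case kle: False
            have aj: "j < a" "j < b" using False by auto
            have "Amat n k a b = 0"
            proof (cases "k = 1")
              case True
              have "\<not>(a = 1 \<and> b = 1)" using aj False2 by auto
              then show ?thesis using True by (simp add: Amat_entry)
            next
              case k1: False
              have "\<not>(a = k \<and> b = k)" using aj kle False2 by auto
              moreover have "\<not>((a = k - 1 \<and> b = n) \<or> (a = n \<and> b = k - 1))" using aj kle by auto
              ultimately show ?thesis using k1 by (simp add: Amat_entry)
            qed
            then show ?thesis by simp
          qed
        qed
        then show ?thesis by (subst if_not_P[OF False2]) simp
      qed
    qed
    have "frob n Y X = (\<Sum>a=1..n. \<Sum>b=1..n. if a = Suc j \<and> b = Suc j then c (Suc j) * X (Suc j) (Suc j) else 0)"
      unfolding frob_def using pt by (intro sum.cong refl) auto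
    also have "\<dots> = (\<Sum>a=1..n. if a = Suc j then c (Suc j) * X (Suc j) (Suc j) else 0)"
      by (intro sum.cong refl) (use n3 in auto)
    also have "\<dots> = c (Suc j) * X (Suc j) (Suc j)" using n3 by simp
    finally show ?thesis .
  qed
  have cne: "c (Suc j) \<noteq> 0"
  proof
    assume "c (Suc j) = 0"
    then have "\<forall>X\<in>zero_oplus_psd n j. frob n Y X = 0" using key by simp
    then show False using Ynp Ysym unfolding perp_def by blast
  qed
  show ?thesis
  proof (intro set_eqI iffI)
    fix X assume "X \<in> zero_oplus_psd n j \<inter> {X \<in> symS n. frob n Y X = 0}"
    then have XF: "X \<in> zero_oplus_psd n j" and f0: "frob n Y X = 0" by auto
    have Xs: "X \<in> symS n" using XF unfolding zero_oplus_psd_def by blast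
    have sym: "\<forall>a b. X a b = X b a" using Xs unfolding symS_def by blast
    have out: "X a b = 0" if "a \<notin> {1..n} \<or> b \<notin> {1..n}" for a b using Xs that unfolding symS_def by blast
    have Xz: "X a b = 0" if "a \<le> j \<or> b \<le> j" for a b using XF that unfolding zero_oplus_psd_def by blast
    have psd: "\<forall>v::nat\<Rightarrow>real. (\<Sum>a\<in>{Suc j..n}. \<Sum>b\<in>{Suc j..n}. v a * X a b * v b) \<ge> 0"
      using XF unfolding zero_oplus_psd_def by simp
    have d: "X (Suc j) (Suc j) = 0" using key[OF XF] f0 cne by simp
    have row: "X (Suc j) b = 0" for b
    proof -
      consider "b \<le> j" | "b = Suc j" | "Suc j < b" "b \<le> n" | "n < b" by linarith
      then show ?thesis
      proof cases
        case 3 then show ?thesis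
          by (intro psd_diag_zero[OF _ psd sym _ _ _ d]) (use n3 in auto)
      qed (use Xz d out in auto)
    qed
    have col: "X a (Suc j) = 0" for a using row sym by metis
    have z: "\<forall>a b. a \<le> Suc j \<or> b \<le> Suc j \<longrightarrow> X a b = 0"
      using Xz row col by (metis le_Suc_eq)
    have "\<forall>v::nat\<Rightarrow>real. (\<Sum>a=Suc j+1..n. \<Sum>b=Suc j+1..n. v a * X a b * v b) \<ge> 0"
      using psd drop_row[of X "Suc j" n] row col n3 by simp
    then show "X \<in> zero_oplus_psd n (Suc j)" using Xs z unfolding zero_oplus_psd_def by blast
  next
    fix X assume XS: "X \<in> zero_oplus_psd n (Suc j)"
    have Xs: "X \<in> symS n" using XS unfolding zero_oplus_psd_def by blast
    have z: "X a b = 0" if "a \<le> Suc j \<or> b \<le> Suc j" for a b using XS that unfolding zero_oplus_psd_def by blast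
    have psd: "\<forall>v::nat\<Rightarrow>real. (\<Sum>a=Suc (Suc j)..n. \<Sum>b=Suc (Suc j)..n. v a * X a b * v b) \<ge> 0"
      using XS unfolding zero_oplus_psd_def by simp
    have "\<forall>v::nat\<Rightarrow>real. (\<Sum>a=Suc j..n. \<Sum>b=Suc j..n. v a * X a b * v b) \<ge> 0"
      using psd drop_row[of X "Suc j" n] z n3 by simp
    then have XF: "X \<in> zero_oplus_psd n j" using Xs z unfolding zero_oplus_psd_def by auto
    have "frob n Y X = 0" using key[OF XF] z by simp
    then show "X \<in> zero_oplus_psd n j \<inter> {X \<in> symS n. frob n Y X = 0}" using XF Xs by blast
  qed
qed

lemma face_Suc:
  "fr_face n K ys (Suc j) = fr_face n K ys j \<inter> {X \<in> symS n. frob n (ys ! j) X = 0}"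
  unfolding fr_face_def by (auto simp: less_Suc_eq)

lemma face_0: "fr_face n (PSD n) ys 0 = zero_oplus_psd n 0"
  unfolding fr_face_def zero_oplus_psd_def PSD_def symS_def by auto

theorem claim1:
  fixes n i :: nat and Ys :: "mat list"
  assumes "n \<ge> 3"
    and "1 \<le> i" and "i \<le> (n - 1) - 1"
    and "length Ys = i"
    and "strict_fr_seq n (PSD n) Ys"
    and "set Ys \<subseteq> linA n"
  shows "fr_face n (PSD n) Ys i = zero_oplus_psd n i"
proof -
  have "j \<le> i \<longrightarrow> fr_face n (PSD n) Ys j = zero_oplus_psd n j" for j
  proof (induction j)
    case 0 show ?case using face_0 by simp
  next
    case (Suc j)
    show ?case
    proof
      assume ji: "Suc j \<le> i"
      then have IH: "fr_face n (PSD n) Ys j = zero_oplus_psd n j" using Suc by simp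
      have jl: "j < length Ys" using ji assms(4) by simp
      have lin: "Ys ! j \<in> linA n" using assms(6) jl by auto
      have st: "Ys ! j \<in> dualc n (fr_face n (PSD n) Ys j) - perp n (fr_face n (PSD n) Ys j)"
        using assms(5) jl unfolding strict_fr_seq_def by blast
      show "fr_face n (PSD n) Ys (Suc j) = zero_oplus_psd n (Suc j)"
        unfolding face_Suc IH
        by (rule step) (use ji assms(3) lin st IH in auto)
    qed
  qed
  then show ?thesis by simp
qed

end
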